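(* Let $1\le n\le L$. If $q_i=p_i$ for all $i$, then $$Z_{L,n}=\binom{L-1}{n-1}\,e_{n-1}(p_1,\dots,p_n)^{L-n},$$ where $e_{n-1}$ is the elementary symmetric polynomial of degree $n-1$.
   Context: Particle labels are taken modulo $n$. $\Omega_{L,n}$ is the set of words $w_1\cdots w_L$ on the ring $\mathbb{Z}/L\mathbb{Z}$ over the alphabet $\{\bullet_1,\dots,\bullet_n,\Box_1,\dots,\Box_n\}$ in which each $\bullet_k$ occurs exactly once, the $\bullet_1,\dots,\bullet_n$ appear in this cyclic order, and the remaining $L-n$ letters are arbitrary $\Box_i$'s. For $w\in\Omega_{L,n}$ let $b_k$ be the position of $\bullet_k$ and $C_k$ the set of positions strictly between $b_k$ and $b_{k+1}$ going cyclically forward ($b_{n+1}=b_1$). For $i,k\in\{1,\dots,n\}$ set $w_\Box(i,k)=p_1\cdots p_{i-1}q_{i+1}\cdots q_kp_{k+1}\cdots p_n$ if $i\le k$ and $w_\Box(i,k)=q_1\cdots q_kp_{k+1}\cdots p_{i-1}q_{i+1}\cdots q_n$ if $k<i$ (empty products are $1$). The weight is $\mathrm{wt}(w)=\prod_{k=1}^n\prod_{j\in C_k}w_\Box(i_j,k)$ where $w_j=\Box_{i_j}$. The restricted partition function is $Z_{L,n}=\sum\mathrm{wt}(w)$, the sum over $w\in\Omega_{L,n}$ with $w_1=\bullet_1$; it is a polynomial in $p_1,\dots,p_n,q_1,\dots,q_n$, and the claim is about its specialization. *)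

theory Defs
  imports Main "HOL-Library.FuncSet"
begin

text \<open>Letters: Bullet k is the particle of species k, Box i is the box letter with label i.
  Positions of a word on the ring Z/LZ are represented by 1..L.\<close>

datatype letter = Bullet nat | Box nat

fun boxlabel :: "letter \<Rightarrow> nat" where
  "boxlabel (Box i) = i"
| "boxlabel (Bullet k) = 0"

definition letters :: "nat \<Rightarrow> letter set" where
  "letters n = Bullet ` {1..n} \<union> Box ` {1..n}"

definition nxt :: "nat \<Rightarrow> nat \<Rightarrow> nat" where
  "nxt n k = k mod n + 1"

definition bpos :: "nat \<Rightarrow> (nat \<Rightarrow> letter) \<Rightarrow> nat \<Rightarrow> nat" where
  "bpos L w k = (THE j. j \<in> {1..L} \<and> w j = Bullet k)"

text \<open>The bullets 1..n appear in this cyclic order: the cyclic sequence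
  b_1, b_2, ..., b_n, b_1 has at most one (weak) descent.\<close>
definition cyc_ordered :: "nat \<Rightarrow> nat \<Rightarrow> (nat \<Rightarrow> letter) \<Rightarrow> bool" where
  "cyc_ordered L n w \<longleftrightarrow>
     card {k \<in> {1..n}. bpos L w (nxt n k) \<le> bpos L w k} \<le> 1"

definition Omega :: "nat \<Rightarrow> nat \<Rightarrow> (nat \<Rightarrow> letter) set" where
  "Omega L n = {w \<in> {1..L} \<rightarrow>\<^sub>E letters n.
      (\<forall>k\<in>{1..n}. card {j \<in> {1..L}. w j = Bullet k} = 1) \<and> cyc_ordered L n w}"

definition cdist :: "nat \<Rightarrow> nat \<Rightarrow> nat \<Rightarrow> int" where
  "cdist L a j = (int j - int a) mod int L"

definition cyc_between :: "nat \<Rightarrow> nat \<Rightarrow> nat \<Rightarrow> nat set" where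
  "cyc_between L a c = {j \<in> {1..L}. 0 < cdist L a j \<and>
      cdist L a j < (if c = a then int L else cdist L a c)}"

definition Cset :: "nat \<Rightarrow> nat \<Rightarrow> (nat \<Rightarrow> letter) \<Rightarrow> nat \<Rightarrow> nat set" where
  "Cset L n w k = cyc_between L (bpos L w k) (bpos L w (nxt n k))"

definition wbox :: "(nat \<Rightarrow> 'a::comm_ring_1) \<Rightarrow> (nat \<Rightarrow> 'a) \<Rightarrow> nat \<Rightarrow> nat \<Rightarrow> nat \<Rightarrow> 'a" where
  "wbox p q n i k =
     (if i \<le> k then (\<Prod>j\<in>{1..<i}. p j) * (\<Prod>j\<in>{i<..k}. q j) * (\<Prod>j\<in>{k<..n}. p j)
      else (\<Prod>j\<in>{1..k}. q j) * (\<Prod>j\<in>{k<..<i}. p j) * (\<Prod>j\<in>{i<..n}. q j))"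

definition wt :: "nat \<Rightarrow> nat \<Rightarrow> (nat \<Rightarrow> 'a::comm_ring_1) \<Rightarrow> (nat \<Rightarrow> 'a) \<Rightarrow> (nat \<Rightarrow> letter) \<Rightarrow> 'a" where
  "wt L n p q w = (\<Prod>k\<in>{1..n}. \<Prod>j\<in>Cset L n w k. wbox p q n (boxlabel (w j)) k)"

definition Zres :: "nat \<Rightarrow> nat \<Rightarrow> (nat \<Rightarrow> 'a::comm_ring_1) \<Rightarrow> (nat \<Rightarrow> 'a) \<Rightarrow> 'a" where
  "Zres L n p q = (\<Sum>w\<in>{w \<in> Omega L n. w 1 = Bullet 1}. wt L n p q w)"

definition esym :: "nat \<Rightarrow> (nat \<Rightarrow> 'a::comm_ring_1) \<Rightarrow> nat \<Rightarrow> 'a" where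
  "esym m x n = (\<Sum>S\<in>{S. S \<subseteq> {1..n} \<and> card S = m}. \<Prod>i\<in>S. x i)"

end

theory Submission
  imports Defs "HOL-Library.FuncSet"
begin


lemma bpos_unique:
  assumes w: "w \<in> Omega L n" and k: "k \<in> {1..n}"
  shows "bpos L w k \<in> {1..L}" "w (bpos L w k) = Bullet k"
    "\<And>j. j \<in> {1..L} \<Longrightarrow> w j = Bullet k \<Longrightarrow> j = bpos L w k"
proof -
  have "card {j \<in> {1..L}. w j = Bullet k} = 1" using w k unfolding Omega_def by auto
  then obtain j0 where j0: "{j \<in> {1..L}. w j = Bullet k} = {j0}" by (rule card_1_singletonE)
  have e: "bpos L w k = j0" unfolding bpos_def
    by (rule the_equality) (use j0 in auto)
  show "bpos L w k \<in> {1..L}" "w (bpos L w k) = Bullet k" using j0 e by auto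
  show "\<And>j. j \<in> {1..L} \<Longrightarrow> w j = Bullet k \<Longrightarrow> j = bpos L w k" using j0 e by auto
qed

lemma nxt_simps: "1 \<le> k \<Longrightarrow> k < n \<Longrightarrow> nxt n k = k + 1" "nxt n n = 1"
  unfolding nxt_def by auto

lemma bpos_step:
  assumes w: "w \<in> Omega L n" and w1: "w 1 = Bullet 1" and n: "1 \<le> n" "1 \<le> L"
    and k: "1 \<le> k" "k < n"
  shows "bpos L w k < bpos L w (k+1)"
proof (rule ccontr)
  assume "\<not> ?thesis"
  hence c: "bpos L w (nxt n k) \<le> bpos L w k" using nxt_simps k by simp
  have b1: "bpos L w 1 = 1" using bpos_unique(3)[OF w, of 1 1] n w1 by auto
  have "bpos L w (nxt n n) \<le> bpos L w n"
    using nxt_simps(2)[of n] b1 bpos_unique(1)[OF w, of n] n by auto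
  hence "{k, n} \<subseteq> {k \<in> {1..n}. bpos L w (nxt n k) \<le> bpos L w k}" using c k by auto
  hence "card {k, n} \<le> card {k \<in> {1..n}. bpos L w (nxt n k) \<le> bpos L w k}"
    by (intro card_mono) auto
  moreover have "card {k \<in> {1..n}. bpos L w (nxt n k) \<le> bpos L w k} \<le> 1"
    using w unfolding Omega_def cyc_ordered_def by auto
  ultimately show False using k by auto
qed

lemma bpos_mono:
  assumes w: "w \<in> Omega L n" and w1: "w 1 = Bullet 1" and n: "1 \<le> n" "1 \<le> L"
    and k: "1 \<le> k" "k < k'" "k' \<le> n"
  shows "bpos L w k < bpos L w k'"
proof -
  have "\<forall>k'. k < k' \<longrightarrow> k' \<le> n \<longrightarrow> bpos L w k < bpos L w k'"
  proof (intro allI)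
    fix k' show "k < k' \<longrightarrow> k' \<le> n \<longrightarrow> bpos L w k < bpos L w k'"
    proof (induction k')
      case 0 then show ?case by simp
    next
      case (Suc m)
      show ?case
      proof (intro impI)
        assume a: "k < Suc m" "Suc m \<le> n"
        have s: "bpos L w m < bpos L w (m+1)" if "1 \<le> m" 
          using bpos_step[OF w w1 n, of m] that a by auto
        show "bpos L w k < bpos L w (Suc m)"
        proof (cases "k < m")
          case True then show ?thesis using Suc.IH a s k by force
        next
          case False then have "k = m" using a by simp
          then show ?thesis using s k by simp
        qed
      qed
    qed
  qed
  then show ?thesis using k by blast
qed


lemma cdist_eq: "a \<in> {1..L} \<Longrightarrow> j \<in> {1..L} \<Longrightarrow>
   cdist L a j = (if a \<le> j then int j - int a else int j - int a + int L)"
proof -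
  assume a: "a \<in> {1..L}" and j: "j \<in> {1..L}"
  show ?thesis
  proof (cases "a \<le> j")
    case True
    then show ?thesis unfolding cdist_def using a j by (simp add: mod_pos_pos_trivial)
  next
    case False
    have "(int j - int a) mod int L = (int j - int a + int L) mod int L" by simp
    also have "\<dots> = int j - int a + int L" using a j False by (intro mod_pos_pos_trivial) auto
    finally show ?thesis unfolding cdist_def using False by simp
  qed
qed


lemma cyc_between_lt:
  assumes "a \<in> {1..L}" "c \<in> {1..L}" "a < c"
  shows "cyc_between L a c = {j. a < j \<and> j < c}"
proof (intro set_eqI iffI)
  fix j assume "j \<in> cyc_between L a c"
  hence j: "j \<in> {1..L}" "0 < cdist L a j" "cdist L a j < cdist L a c" using assms
    unfolding cyc_between_def by auto
  have cc: "cdist L a c = int c - int a" using cdist_eq[of a L c] assms by auto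
  show "j \<in> {j. a < j \<and> j < c}"
  proof (cases "a \<le> j")
    case True
    then show ?thesis using j cc cdist_eq[of a L j] assms by auto
  next
    case False
    then show ?thesis using j cc cdist_eq[of a L j] assms by auto
  qed
next
  fix j assume "j \<in> {j. a < j \<and> j < c}"
  hence j: "a < j" "j < c" by auto
  have cc: "cdist L a c = int c - int a" using cdist_eq[of a L c] assms by auto
  have cj: "cdist L a j = int j - int a" using cdist_eq[of a L j] assms j by auto
  show "j \<in> cyc_between L a c" unfolding cyc_between_def using cc cj j assms by auto
qed

lemma cyc_between_to1:
  assumes "a \<in> {1..L}"
  shows "cyc_between L a 1 = {j. a < j \<and> j < L + 1}"
proof (intro set_eqI iffI)
  fix j assume "j \<in> cyc_between L a 1"
  hence j: "j \<in> {1..L}" "0 < cdist L a j" "cdist L a j < (if 1 = a then int L else cdist L a 1)" using assms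
    unfolding cyc_between_def by auto
  have cc: "a \<noteq> 1 \<Longrightarrow> cdist L a 1 = 1 - int a + int L" using cdist_eq[of a L 1] assms by auto
  show "j \<in> {j. a < j \<and> j < L + 1}"
  proof (cases "a \<le> j")
    case True
    then show ?thesis using j cc cdist_eq[of a L j] assms by auto
  next
    case False
    then show ?thesis using j cc cdist_eq[of a L j] assms by (auto split: if_splits)
  qed
next
  fix j assume "j \<in> {j. a < j \<and> j < L + 1}"
  hence j: "a < j" "j \<le> L" by auto
  have cc: "a \<noteq> 1 \<Longrightarrow> cdist L a 1 = 1 - int a + int L" using cdist_eq[of a L 1] assms by auto
  have cj: "cdist L a j = int j - int a" using cdist_eq[of a L j] assms j by auto
  show "j \<in> cyc_between L a 1" unfolding cyc_between_def using cc cj j assms by auto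
qed



lemma Cset_eq:
  assumes w: "w \<in> Omega L n" and w1: "w 1 = Bullet 1" and n: "1 \<le> n" "1 \<le> L"
    and k: "k \<in> {1..n}"
  shows "Cset L n w k = {j. bpos L w k < j \<and> j < (if k < n then bpos L w (k+1) else L+1)}"
proof -
  let ?a = "bpos L w k"
  have a: "?a \<in> {1..L}" using bpos_unique(1)[OF w k] .
  have b1: "bpos L w 1 = 1" using bpos_unique(3)[OF w, of 1 1] n w1 by auto
  show ?thesis
  proof (cases "k < n")
    case True
    let ?c = "bpos L w (k+1)"
    have c: "?c \<in> {1..L}" using bpos_unique(1)[OF w, of "k+1"] True by auto
    have ac: "?a < ?c" using bpos_step[OF w w1 n, of k] True k by auto
    have nx: "nxt n k = k+1" using nxt_simps(1)[of k n] True k by auto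
    show ?thesis unfolding Cset_def nx using cyc_between_lt[OF a c ac] True by simp
  next
    case False
    hence kn: "k = n" using k by auto
    have nx: "nxt n k = 1" using kn nxt_simps(2) by simp
    show ?thesis unfolding Cset_def nx b1 using cyc_between_to1[OF a] False by simp
  qed
qed

definition Tw :: "nat \<Rightarrow> (nat \<Rightarrow> letter) \<Rightarrow> nat set" where
  "Tw L w = {j \<in> {1..L}. \<exists>k. w j = Bullet k}"

lemma Tw_eq:
  assumes w: "w \<in> Omega L n"
  shows "Tw L w = bpos L w ` {1..n}"
proof
  show "Tw L w \<subseteq> bpos L w ` {1..n}"
  proof
    fix j assume "j \<in> Tw L w"
    then obtain k where j: "j \<in> {1..L}" "w j = Bullet k" unfolding Tw_def by auto
    have "w j \<in> letters n" using w j(1) unfolding Omega_def by (auto simp: PiE_iff)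
    hence k: "k \<in> {1..n}" using j unfolding letters_def by auto
    show "j \<in> bpos L w ` {1..n}" using bpos_unique(3)[OF w k j] k by auto
  qed
  show "bpos L w ` {1..n} \<subseteq> Tw L w"
    using bpos_unique(1,2)[OF w] unfolding Tw_def by auto
qed


lemma bpos_le:
  assumes w: "w \<in> Omega L n" and w1: "w 1 = Bullet 1" and n: "1 \<le> n" "1 \<le> L"
    and k: "1 \<le> k" "k \<le> k'" "k' \<le> n"
  shows "bpos L w k \<le> bpos L w k'"
  using bpos_mono[OF w w1 n, of k k'] k by (cases "k = k'") auto

lemma bpos_less_iff:
  assumes w: "w \<in> Omega L n" and w1: "w 1 = Bullet 1" and n: "1 \<le> n" "1 \<le> L"
    and k: "k \<in> {1..n}" "k' \<in> {1..n}"
  shows "bpos L w k < bpos L w k' \<longleftrightarrow> k < k'"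
  using bpos_mono[OF w w1 n, of k k'] bpos_mono[OF w w1 n, of k' k] k
  by (metis atLeastAtMost_iff less_asym' linorder_neqE_nat)


lemma Cset_partition:
  assumes w: "w \<in> Omega L n" and w1: "w 1 = Bullet 1" and n: "1 \<le> n" "1 \<le> L"
  shows "(\<Union>k\<in>{1..n}. Cset L n w k) = {1..L} - Tw L w"
    "\<And>k k'. k \<in> {1..n} \<Longrightarrow> k' \<in> {1..n} \<Longrightarrow> k \<noteq> k' \<Longrightarrow> Cset L n w k \<inter> Cset L n w k' = {}"
    "\<And>k. finite (Cset L n w k)"
proof -
  let ?b = "bpos L w"
  let ?e = "\<lambda>k. if k < n then ?b (k+1) else L+1"
  have CE: "\<And>k. k \<in> {1..n} \<Longrightarrow> Cset L n w k = {j. ?b k < j \<and> j < ?e k}"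
    using Cset_eq[OF w w1 n] by blast
  have bL: "\<And>k. k \<in> {1..n} \<Longrightarrow> ?b k \<in> {1..L}" using bpos_unique(1)[OF w] by blast
  have b1: "?b 1 = 1" using bpos_unique(3)[OF w, of 1 1] n w1 by auto
  have lt: "\<And>k k'. k \<in> {1..n} \<Longrightarrow> k' \<in> {1..n} \<Longrightarrow> ?b k < ?b k' \<longleftrightarrow> k < k'"
    using bpos_less_iff[OF w w1 n] by blast
  show "\<And>k. finite (Cset L n w k)" unfolding Cset_def cyc_between_def by auto
  show "\<And>k k'. k \<in> {1..n} \<Longrightarrow> k' \<in> {1..n} \<Longrightarrow> k \<noteq> k' \<Longrightarrow> Cset L n w k \<inter> Cset L n w k' = {}"
  proof -
    fix k k' assume kk: "k \<in> {1..n}" "k' \<in> {1..n}" "k \<noteq> k'"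
    have *: "Cset L n w k \<inter> Cset L n w k' = {}" if "k < k'" "k \<in> {1..n}" "k' \<in> {1..n}" for k k'
    proof -
      have le: "?e k \<le> ?b k'"
        using that bpos_le[OF w w1 n, of "k+1" k'] by auto
      have g: "\<And>a x y z::nat. x \<le> y \<Longrightarrow> {j. a<j \<and> j<x} \<inter> {j. y<j \<and> j<z} = {}" by auto
      show ?thesis unfolding CE[OF that(2)] CE[OF that(3)] by (rule g[OF le])
    qed
    show "Cset L n w k \<inter> Cset L n w k' = {}"
      using kk *[of k k'] *[of k' k] by (cases "k < k'") auto
  qed
  show "(\<Union>k\<in>{1..n}. Cset L n w k) = {1..L} - Tw L w"
  proof
    show "(\<Union>k\<in>{1..n}. Cset L n w k) \<subseteq> {1..L} - Tw L w"
    proof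
      fix j assume "j \<in> (\<Union>k\<in>{1..n}. Cset L n w k)"
      then obtain k where k: "k \<in> {1..n}" "?b k < j" "j < ?e k" using CE by blast
      have jL: "j \<in> {1..L}"
      proof (cases "k < n")
        case True then show ?thesis using k bL[of "k+1"] bL[of k] by auto
      next
        case False then show ?thesis using k bL[of k] by auto
      qed
      have "j \<notin> ?b ` {1..n}"
      proof
        assume "j \<in> ?b ` {1..n}"
        then obtain i where i: "i \<in> {1..n}" "j = ?b i" by auto
        have "k < i" using lt[OF k(1) i(1)] k i by simp
        moreover have "i < k + 1"
        proof (cases "k < n")
          case True then show ?thesis using lt[OF i(1), of "k+1"] k i by auto
        next
          case False then show ?thesis using i k by auto
        qed
        ultimately show False by simp
      qed
      then show "j \<in> {1..L} - Tw L w" using jL Tw_eq[OF w] by auto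
    qed
    show "{1..L} - Tw L w \<subseteq> (\<Union>k\<in>{1..n}. Cset L n w k)"
    proof
      fix j assume j: "j \<in> {1..L} - Tw L w"
      hence jn: "j \<notin> ?b ` {1..n}" "j \<in> {1..L}" using Tw_eq[OF w] by auto
      let ?S = "{i \<in> {1..n}. ?b i < j}"
      have "j \<noteq> 1" using jn(1) b1 n by force
      hence "1 \<in> ?S" using jn(2) b1 n by simp
      hence ne: "?S \<noteq> {}" by blast
      define k where "k = Max ?S"
      have kS: "k \<in> ?S" unfolding k_def using ne by (intro Max_in) auto
      have "j < ?e k"
      proof (cases "k < n")
        case True
        have "k + 1 \<in> ?S \<Longrightarrow> k + 1 \<le> k" unfolding k_def by (rule Max_ge) auto
        hence "k + 1 \<notin> ?S" by auto
        hence "?b (k+1) \<ge> j" using True kS by auto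
        moreover have "?b (k+1) \<noteq> j" using jn True kS by force
        ultimately show ?thesis using True by simp
      next
        case False then show ?thesis using jn by auto
      qed
      then show "j \<in> (\<Union>k\<in>{1..n}. Cset L n w k)" using CE[of k] kS by auto
    qed
  qed
qed



definition gg :: "(nat \<Rightarrow> 'a::comm_ring_1) \<Rightarrow> nat \<Rightarrow> nat \<Rightarrow> 'a" where
  "gg p n i = (\<Prod>j\<in>{1..n}-{i}. p j)"

lemma wbox_eq:
  assumes pq: "\<forall>i\<in>{1..n}. q i = p i" and i: "i \<in> {1..n}" and k: "k \<in> {1..n}"
  shows "wbox p q n i k = gg p n i"
proof (cases "i \<le> k")
  case True
  have q1: "(\<Prod>j\<in>{i<..k}. q j) = (\<Prod>j\<in>{i<..k}. p j)" using pq k by (intro prod.cong) auto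
  have "(\<Prod>j\<in>{1..<i}. p j) * (\<Prod>j\<in>{i<..k}. p j) * (\<Prod>j\<in>{k<..n}. p j)
      = (\<Prod>j\<in>{1..<i} \<union> {i<..k} \<union> {k<..n}. p j)"
  proof -
    have d1: "prod p ({1..<i} \<union> {i<..k} \<union> {k<..n}) = prod p ({1..<i} \<union> {i<..k}) * prod p {k<..n}"
      by (rule prod.union_disjoint) (use True in auto)
    have d2: "prod p ({1..<i} \<union> {i<..k}) = prod p {1..<i} * prod p {i<..k}"
      by (rule prod.union_disjoint) auto
    show ?thesis using d1 d2 by simp
  qed
  also have "{1..<i} \<union> {i<..k} \<union> {k<..n} = {1..n}-{i}" using True i k by auto
  finally show ?thesis unfolding wbox_def gg_def using True q1 by simp
next
  case False
  have q1: "(\<Prod>j\<in>{1..k}. q j) = (\<Prod>j\<in>{1..k}. p j)" using pq k by (intro prod.cong) auto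
  have q2: "(\<Prod>j\<in>{i<..n}. q j) = (\<Prod>j\<in>{i<..n}. p j)" using pq k by (intro prod.cong) auto
  have "(\<Prod>j\<in>{1..k}. p j) * (\<Prod>j\<in>{k<..<i}. p j) * (\<Prod>j\<in>{i<..n}. p j)
      = (\<Prod>j\<in>{1..k} \<union> {k<..<i} \<union> {i<..n}. p j)"
  proof -
    have d1: "prod p ({1..k} \<union> {k<..<i} \<union> {i<..n}) = prod p ({1..k} \<union> {k<..<i}) * prod p {i<..n}"
      by (rule prod.union_disjoint) (use False in auto)
    have d2: "prod p ({1..k} \<union> {k<..<i}) = prod p {1..k} * prod p {k<..<i}"
      by (rule prod.union_disjoint) auto
    show ?thesis using d1 d2 by simp
  qed
  also have "{1..k} \<union> {k<..<i} \<union> {i<..n} = {1..n}-{i}" using False i k by auto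
  finally show ?thesis unfolding wbox_def gg_def using False q1 q2 by simp
qed

lemma box_label:
  assumes w: "w \<in> Omega L n" and j: "j \<in> {1..L} - Tw L w"
  shows "w j = Box (boxlabel (w j))" "boxlabel (w j) \<in> {1..n}"
proof -
  have "w j \<in> letters n" using w j unfolding Omega_def by (auto simp: PiE_iff)
  moreover have "\<forall>k. w j \<noteq> Bullet k" using j unfolding Tw_def by auto
  ultimately obtain i where "w j = Box i" "i \<in> {1..n}" unfolding letters_def by auto
  then show "w j = Box (boxlabel (w j))" "boxlabel (w j) \<in> {1..n}" by auto
qed

lemma wt_eq:
  assumes w: "w \<in> Omega L n" and w1: "w 1 = Bullet 1" and n: "1 \<le> n" "1 \<le> L"
    and pq: "\<forall>i\<in>{1..n}. q i = p i"
  shows "wt L n p q w = (\<Prod>j\<in>{1..L} - Tw L w. gg p n (boxlabel (w j)))"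
proof -
  have "wt L n p q w = (\<Prod>k\<in>{1..n}. \<Prod>j\<in>Cset L n w k. gg p n (boxlabel (w j)))"
    unfolding wt_def
  proof (intro prod.cong refl)
    fix k j assume k: "k \<in> {1..n}" and j: "j \<in> Cset L n w k"
    have "j \<in> {1..L} - Tw L w" using Cset_partition(1)[OF w w1 n] k j by blast
    then show "wbox p q n (boxlabel (w j)) k = gg p n (boxlabel (w j))"
      using wbox_eq[OF pq box_label(2)[OF w] k] by blast
  qed
  also have "\<dots> = (\<Prod>j\<in>(\<Union>k\<in>{1..n}. Cset L n w k). gg p n (boxlabel (w j)))"
    by (rule prod.UNION_disjoint[symmetric]) (use Cset_partition(2,3)[OF w w1 n] in auto)
  also have "\<dots> = (\<Prod>j\<in>{1..L} - Tw L w. gg p n (boxlabel (w j)))"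
    unfolding Cset_partition(1)[OF w w1 n] ..
  finally show ?thesis .
qed

lemma esym_gg:
  assumes n: "1 \<le> n"
  shows "(\<Sum>i\<in>{1..n}. gg p n i) = esym (n - 1) p n"
proof -
  have bij: "bij_betw (\<lambda>i. {1..n} - {i}) {1..n} {S. S \<subseteq> {1..n} \<and> card S = n - 1}"
  proof (rule bij_betw_byWitness[where f' = "\<lambda>S. the_elem ({1..n} - S)"])
    show "\<forall>a\<in>{1..n}. the_elem ({1..n} - ({1..n} - {a})) = a"
    proof
      fix a :: nat assume "a \<in> {1..n}"
      hence "{1..n} - ({1..n} - {a}) = {a}" by auto
      then show "the_elem ({1..n} - ({1..n} - {a})) = a" by simp
    qed
    show "\<forall>S\<in>{S. S \<subseteq> {1..n} \<and> card S = n - 1}. {1..n} - {the_elem ({1..n} - S)} = S"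
    proof
      fix S assume S: "S \<in> {S. S \<subseteq> {1..n} \<and> card S = n - 1}"
      have "finite S" using S finite_subset by blast
      hence "card ({1..n} - S) = card {1..n} - card S" using S by (intro card_Diff_subset) auto
      hence "card ({1..n} - S) = 1" using S n by simp
      then obtain x where x: "{1..n} - S = {x}" by (rule card_1_singletonE)
      then show "{1..n} - {the_elem ({1..n} - S)} = S" using S by auto
    qed
    show "(\<lambda>i. {1..n} - {i}) ` {1..n} \<subseteq> {S. S \<subseteq> {1..n} \<and> card S = n - 1}" by auto
    show "(\<lambda>S. the_elem ({1..n} - S)) ` {S. S \<subseteq> {1..n} \<and> card S = n - 1} \<subseteq> {1..n}"
    proof
      fix y assume "y \<in> (\<lambda>S. the_elem ({1..n} - S)) ` {S. S \<subseteq> {1..n} \<and> card S = n - 1}"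
      then obtain S where S: "S \<subseteq> {1..n}" "card S = n - 1" "y = the_elem ({1..n} - S)" by auto
      have "finite S" using S finite_subset by blast
      hence "card ({1..n} - S) = card {1..n} - card S" using S by (intro card_Diff_subset) auto
      hence "card ({1..n} - S) = 1" using S n by simp
      then obtain x where x: "{1..n} - S = {x}" by (rule card_1_singletonE)
      then show "y \<in> {1..n}" using S by auto
    qed
  qed
  show ?thesis unfolding esym_def gg_def
    by (rule sum.reindex_bij_betw[OF bij])
qed



definition rank :: "nat set \<Rightarrow> nat \<Rightarrow> nat" where
  "rank T j = card {x \<in> T. x \<le> j}"

definition WW :: "nat \<Rightarrow> nat set \<Rightarrow> (nat \<Rightarrow> nat) \<Rightarrow> nat \<Rightarrow> letter" where
  "WW L T lab = (\<lambda>j. if j \<in> {1..L} then (if j \<in> T then Bullet (rank T j) else Box (lab j)) else undefined)"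

lemma rank_mono: "finite T \<Longrightarrow> x \<le> y \<Longrightarrow> rank T x \<le> rank T y"
  unfolding rank_def by (intro card_mono) auto

lemma rank_strict: "finite T \<Longrightarrow> x < y \<Longrightarrow> y \<in> T \<Longrightarrow> rank T x < rank T y"
  unfolding rank_def
proof (intro psubset_card_mono)
  assume "finite T" "x < y" "y \<in> T"
  then show "{z \<in> T. z \<le> x} \<subset> {z \<in> T. z \<le> y}" by (auto simp: less_le_not_le)
qed auto

lemma rank_bij:
  assumes T: "T \<subseteq> {1..L}" "card T = n"
  shows "bij_betw (rank T) T {1..n}"
proof -
  have fin: "finite T" using T finite_subset by blast
  have inj: "inj_on (rank T) T"
  proof (rule inj_onI)
    fix x y assume xy: "x \<in> T" "y \<in> T" "rank T x = rank T y"
    show "x = y"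
    proof (rule ccontr)
      assume "x \<noteq> y"
      then consider "x < y" | "y < x" by linarith
      then show False
      proof cases
        case 1 then show False using rank_strict[OF fin, of x y] xy by simp
      next
        case 2 then show False using rank_strict[OF fin, of y x] xy by simp
      qed
    qed
  qed
  have sub: "rank T ` T \<subseteq> {1..n}"
  proof
    fix y assume "y \<in> rank T ` T"
    then obtain x where x: "x \<in> T" "y = rank T x" by auto
    have "x \<in> {z \<in> T. z \<le> x}" using x by auto
    moreover have "finite {z \<in> T. z \<le> x}" using fin by auto
    ultimately have "card {z \<in> T. z \<le> x} > 0" by (auto simp: card_gt_0_iff)
    hence "card {z \<in> T. z \<le> x} \<ge> 1" by simp
    moreover have "card {z \<in> T. z \<le> x} \<le> card T" using fin by (intro card_mono) auto
    ultimately show "y \<in> {1..n}" using x T unfolding rank_def by auto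
  qed
  have "card (rank T ` T) = n" using card_image[OF inj] T by simp
  hence "rank T ` T = {1..n}" using sub by (intro card_subset_eq) auto
  then show ?thesis using inj unfolding bij_betw_def by simp
qed

lemma rank_1:
  assumes T: "T \<subseteq> {1..L}" "1 \<in> T"
  shows "rank T 1 = 1"
proof -
  have "{x \<in> T. x \<le> 1} = {1}" using T by auto
  then show ?thesis unfolding rank_def by simp
qed


lemma WW_props:
  assumes T: "T \<subseteq> {1..L}" "1 \<in> T" "card T = n"
    and lab: "lab \<in> ({1..L} - T) \<rightarrow>\<^sub>E {1..n}"
  shows "WW L T lab \<in> Omega L n" "WW L T lab 1 = Bullet 1" "Tw L (WW L T lab) = T"
proof -
  let ?w = "WW L T lab"
  have fin: "finite T" using T finite_subset by blast
  have bij: "bij_betw (rank T) T {1..n}" using rank_bij[OF T(1,3)] .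
  have "card T > 0" using T fin by (auto simp: card_gt_0_iff)
  hence n1: "1 \<le> n" using T by simp
  have L1: "1 \<le> L" using T by auto
  define \<beta> where "\<beta> = the_inv_into T (rank T)"
  have \<beta>: "\<And>k. k \<in> {1..n} \<Longrightarrow> \<beta> k \<in> T \<and> rank T (\<beta> k) = k"
  proof -
    fix k assume k: "k \<in> {1..n}"
    have i: "inj_on (rank T) T" and s: "rank T ` T = {1..n}" using bij unfolding bij_betw_def by auto
    show "\<beta> k \<in> T \<and> rank T (\<beta> k) = k" unfolding \<beta>_def
      using the_inv_into_into[OF i, of k T] f_the_inv_into_f[OF i, of k] k s by auto
  qed
  have rinj: "\<And>x y. x \<in> T \<Longrightarrow> y \<in> T \<Longrightarrow> rank T x = rank T y \<Longrightarrow> x = y"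
    using bij unfolding bij_betw_def inj_on_def by blast
  have Bset: "\<And>k. k \<in> {1..n} \<Longrightarrow> {j \<in> {1..L}. ?w j = Bullet k} = {\<beta> k}"
  proof -
    fix k assume k: "k \<in> {1..n}"
    show "{j \<in> {1..L}. ?w j = Bullet k} = {\<beta> k}"
    proof (intro set_eqI iffI)
      fix j assume "j \<in> {j \<in> {1..L}. ?w j = Bullet k}"
      hence "j \<in> T" "rank T j = k" unfolding WW_def by (auto split: if_splits)
      then show "j \<in> {\<beta> k}" using \<beta>[OF k] rinj by auto
    next
      fix j assume "j \<in> {\<beta> k}"
      then show "j \<in> {j \<in> {1..L}. ?w j = Bullet k}" using \<beta>[OF k] T unfolding WW_def by auto
    qed
  qed
  have bp: "\<And>k. k \<in> {1..n} \<Longrightarrow> bpos L ?w k = \<beta> k"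
  proof -
    fix k assume k: "k \<in> {1..n}"
    show "bpos L ?w k = \<beta> k" unfolding bpos_def
      by (rule the_equality) (use Bset[OF k] in blast)+
  qed
  have ext: "?w \<in> {1..L} \<rightarrow>\<^sub>E letters n"
  proof (rule PiE_I)
    fix j assume j: "j \<in> {1..L}"
    show "?w j \<in> letters n"
    proof (cases "j \<in> T")
      case True
      have r: "rank T j \<in> {1..n}" using bij_betw_apply[OF bij True] .
      have "?w j = Bullet (rank T j)" using j True unfolding WW_def by simp
      then show ?thesis using r unfolding letters_def by blast
    next
      case False
      have r: "lab j \<in> {1..n}" using lab j False by (auto simp: PiE_iff)
      have "?w j = Box (lab j)" using j False unfolding WW_def by simp
      then show ?thesis using r unfolding letters_def by blast
    qed
  next
    fix j assume "j \<notin> {1..L}" then show "?w j = undefined" unfolding WW_def by auto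
  qed
  have cyc: "cyc_ordered L n ?w"
    unfolding cyc_ordered_def
  proof -
    have "{k \<in> {1..n}. bpos L ?w (nxt n k) \<le> bpos L ?w k} \<subseteq> {n}"
    proof
      fix k assume k: "k \<in> {k \<in> {1..n}. bpos L ?w (nxt n k) \<le> bpos L ?w k}"
      show "k \<in> {n}"
      proof (rule ccontr)
        assume "k \<notin> {n}"
        hence kn: "k < n" "1 \<le> k" using k by auto
        have nx: "nxt n k = k + 1" using nxt_simps(1)[OF kn(2,1)] .
        have k1: "k+1 \<in> {1..n}" "k \<in> {1..n}" using kn by auto
        have "\<beta> (k+1) \<le> \<beta> k" using k nx bp[OF k1(1)] bp[OF k1(2)] by simp
        hence "rank T (\<beta> (k+1)) \<le> rank T (\<beta> k)" by (rule rank_mono[OF fin])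
        then show False using \<beta>[OF k1(1)] \<beta>[OF k1(2)] by simp
      qed
    qed
    hence "card {k \<in> {1..n}. bpos L ?w (nxt n k) \<le> bpos L ?w k} \<le> card {n}"
      by (intro card_mono) auto
    then show "card {k \<in> {1..n}. bpos L ?w (nxt n k) \<le> bpos L ?w k} \<le> 1" by simp
  qed
  have "\<forall>k\<in>{1..n}. card {j \<in> {1..L}. ?w j = Bullet k} = 1" using Bset by simp
  then show "?w \<in> Omega L n" unfolding Omega_def using ext cyc by blast
  show "?w 1 = Bullet 1" unfolding WW_def using rank_1[OF T(1,2)] T L1 by auto
  show "Tw L ?w = T" unfolding Tw_def WW_def using T by auto
qed


lemma WW_unique:
  assumes w: "w \<in> Omega L n" and w1: "w 1 = Bullet 1" and n: "1 \<le> n" "1 \<le> L"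
  shows "w = WW L (Tw L w) (restrict (\<lambda>j. boxlabel (w j)) ({1..L} - Tw L w))"
proof
  fix j
  let ?T = "Tw L w"
  let ?b = "bpos L w"
  have fin: "finite ?T" unfolding Tw_def by auto
  show "w j = WW L ?T (restrict (\<lambda>j. boxlabel (w j)) ({1..L} - ?T)) j"
  proof (cases "j \<in> {1..L}")
    case False
    have "w \<in> extensional {1..L}" using w unfolding Omega_def by (auto simp: PiE_iff)
    hence "w j = undefined" using False by (simp add: extensional_def)
    moreover have "WW L ?T (restrict (\<lambda>j. boxlabel (w j)) ({1..L} - ?T)) j = undefined"
      using False unfolding WW_def by auto
    ultimately show ?thesis by simp
  next
    case jL: True
    show ?thesis
    proof (cases "j \<in> ?T")
      case False
      then show ?thesis using box_label(1)[OF w, of j] jL unfolding WW_def by auto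
    next
      case True
      then obtain k where k: "k \<in> {1..n}" "j = ?b k" using Tw_eq[OF w] by auto
      have wj: "w j = Bullet k" using bpos_unique(2)[OF w k(1)] k by simp
      have set: "{x \<in> ?T. x \<le> j} = ?b ` {1..k}"
      proof (intro set_eqI iffI)
        fix x assume "x \<in> {x \<in> ?T. x \<le> j}"
        then obtain i where i: "i \<in> {1..n}" "x = ?b i" "?b i \<le> ?b k" using Tw_eq[OF w] k by auto
        have "i \<le> k" using i(3) bpos_less_iff[OF w w1 n k(1) i(1)] by linarith
        then show "x \<in> ?b ` {1..k}" using i by auto
      next
        fix x assume "x \<in> ?b ` {1..k}"
        then obtain i where i: "i \<in> {1..k}" "x = ?b i" by auto
        have i': "i \<in> {1..n}" using i k by auto
        have "?b i \<le> ?b k" using bpos_le[OF w w1 n, of i k] i k by auto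
        then show "x \<in> {x \<in> ?T. x \<le> j}" using i i' k Tw_eq[OF w] by auto
      qed
      have inj: "inj_on ?b {1..k}"
      proof (rule inj_onI)
        fix x y assume xy: "x \<in> {1..k}" "y \<in> {1..k}" "?b x = ?b y"
        then have "x \<in> {1..n}" "y \<in> {1..n}" using k by auto
        then have "\<not> x < y" "\<not> y < x" using bpos_less_iff[OF w w1 n] xy(3) by (metis less_irrefl)+
        then show "x = y" by simp
      qed
      have "rank ?T j = k" unfolding rank_def set card_image[OF inj] by simp
      then show ?thesis using wj jL True unfolding WW_def by simp
    qed
  qed
qed



lemma card_Tset:
  assumes n: "1 \<le> n" and L: "1 \<le> L"
  shows "card {T. T \<subseteq> {1..L} \<and> 1 \<in> T \<and> card T = n} = (L - 1) choose (n - 1)"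
proof -
  have bij: "bij_betw (insert 1) {S. S \<subseteq> {2..L} \<and> card S = n - 1}
              {T. T \<subseteq> {1..L} \<and> 1 \<in> T \<and> card T = n}"
  proof (rule bij_betw_byWitness[where f' = "\<lambda>T. T - {1}"])
    show "\<forall>a\<in>{S. S \<subseteq> {2..L} \<and> card S = n - 1}. insert 1 a - {1} = a" by auto
    show "\<forall>a'\<in>{T. T \<subseteq> {1..L} \<and> 1 \<in> T \<and> card T = n}. insert 1 (a' - {1}) = a'" by auto
    show "insert 1 ` {S. S \<subseteq> {2..L} \<and> card S = n - 1} \<subseteq> {T. T \<subseteq> {1..L} \<and> 1 \<in> T \<and> card T = n}"
    proof
      fix T assume "T \<in> insert 1 ` {S. S \<subseteq> {2..L} \<and> card S = n - 1}"
      then obtain S where S: "S \<subseteq> {2..L}" "card S = n - 1" "T = insert 1 S" by auto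
      have "finite S" using S(1) finite_subset by blast
      moreover have "1 \<notin> S" using S(1) by auto
      ultimately have "card T = n" using S n by simp
      then show "T \<in> {T. T \<subseteq> {1..L} \<and> 1 \<in> T \<and> card T = n}" using S L by auto
    qed
    show "(\<lambda>T. T - {1}) ` {T. T \<subseteq> {1..L} \<and> 1 \<in> T \<and> card T = n} \<subseteq> {S. S \<subseteq> {2..L} \<and> card S = n - 1}"
    proof
      fix S assume "S \<in> (\<lambda>T. T - {1}) ` {T. T \<subseteq> {1..L} \<and> 1 \<in> T \<and> card T = n}"
      then obtain T where T: "T \<subseteq> {1..L}" "1 \<in> T" "card T = n" "S = T - {1}" by auto
      have "finite T" using T(1) finite_subset by blast
      then have "card S = n - 1" using T by simp
      moreover have "S \<subseteq> {2..L}" using T by auto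
      ultimately show "S \<in> {S. S \<subseteq> {2..L} \<and> card S = n - 1}" by auto
    qed
  qed
  have "card {T. T \<subseteq> {1..L} \<and> 1 \<in> T \<and> card T = n} = card {S. S \<subseteq> {2..L} \<and> card S = n - 1}"
    using bij_betw_same_card[OF bij] by simp
  also have "\<dots> = card {2..L} choose (n - 1)" by (rule n_subsets) simp
  also have "card {2..L} = L - 1" by simp
  finally show ?thesis .
qed

lemma Tw_in:
  assumes w: "w \<in> Omega L n" and w1: "w 1 = Bullet 1" and n: "1 \<le> n" "1 \<le> L"
  shows "Tw L w \<subseteq> {1..L}" "1 \<in> Tw L w" "card (Tw L w) = n"
proof -
  show "Tw L w \<subseteq> {1..L}" unfolding Tw_def by auto
  show "1 \<in> Tw L w" unfolding Tw_def using w1 n by auto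
  have inj: "inj_on (bpos L w) {1..n}"
  proof (rule inj_onI)
    fix x y assume xy: "x \<in> {1..n}" "y \<in> {1..n}" "bpos L w x = bpos L w y"
    then have "\<not> x < y" "\<not> y < x" using bpos_less_iff[OF w w1 n] xy(3) by (metis less_irrefl)+
    then show "x = y" by simp
  qed
  show "card (Tw L w) = n" unfolding Tw_eq[OF w] card_image[OF inj] by simp
qed

lemma fiber_sum:
  assumes T: "T \<subseteq> {1..L}" "1 \<in> T" "card T = n" and n: "1 \<le> n" "1 \<le> L"
  shows "(\<Sum>w\<in>{x \<in> {w \<in> Omega L n. w 1 = Bullet 1}. Tw L x = T}.
            \<Prod>j\<in>{1..L} - Tw L w. gg p n (boxlabel (w j)))
         = esym (n - 1) p n ^ (L - n)"
proof -
  let ?Lab = "({1..L} - T) \<rightarrow>\<^sub>E {1..n}"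
  let ?S = "{x \<in> {w \<in> Omega L n. w 1 = Bullet 1}. Tw L x = T}"
  let ?f' = "\<lambda>w. restrict (\<lambda>j. boxlabel (w j)) ({1..L} - T)"
  have bij: "bij_betw (WW L T) ?Lab ?S"
  proof (rule bij_betw_byWitness[where f' = ?f'])
    show "\<forall>lab\<in>?Lab. ?f' (WW L T lab) = lab"
    proof
      fix lab assume lab: "lab \<in> ?Lab"
      show "?f' (WW L T lab) = lab"
      proof
        fix j show "?f' (WW L T lab) j = lab j"
        proof (cases "j \<in> {1..L} - T")
          case True then show ?thesis unfolding WW_def by auto
        next
          case False then show ?thesis using lab by (auto simp: PiE_def extensional_def)
        qed
      qed
    qed
    show "\<forall>w\<in>?S. WW L T (?f' w) = w"
    proof
      fix w assume "w \<in> ?S"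
      then show "WW L T (?f' w) = w" using WW_unique[OF _ _ n, of w] by auto
    qed
    show "WW L T ` ?Lab \<subseteq> ?S" using WW_props[OF T] by auto
    show "?f' ` ?S \<subseteq> ?Lab"
    proof
      fix x assume "x \<in> ?f' ` ?S"
      then obtain w where w: "w \<in> Omega L n" "Tw L w = T" "x = ?f' w" by auto
      show "x \<in> ?Lab" using box_label(2)[OF w(1)] w(2,3) by auto
    qed
  qed
  have "(\<Sum>w\<in>?S. \<Prod>j\<in>{1..L} - Tw L w. gg p n (boxlabel (w j)))
      = (\<Sum>lab\<in>?Lab. \<Prod>j\<in>{1..L} - Tw L (WW L T lab). gg p n (boxlabel (WW L T lab j)))"
    by (rule sum.reindex_bij_betw[OF bij, symmetric])
  also have "\<dots> = (\<Sum>lab\<in>?Lab. \<Prod>j\<in>{1..L} - T. gg p n (lab j))"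
  proof (rule sum.cong[OF refl])
    fix lab assume lab: "lab \<in> ?Lab"
    show "(\<Prod>j\<in>{1..L} - Tw L (WW L T lab). gg p n (boxlabel (WW L T lab j)))
        = (\<Prod>j\<in>{1..L} - T. gg p n (lab j))"
      unfolding WW_props(3)[OF T lab] by (rule prod.cong[OF refl]) (auto simp: WW_def)
  qed
  also have "\<dots> = (\<Prod>j\<in>{1..L} - T. \<Sum>i\<in>{1..n}. gg p n i)"
    by (rule prod_sum_PiE[symmetric]) auto
  also have "\<dots> = esym (n - 1) p n ^ card ({1..L} - T)" using esym_gg[OF n(1), of p] by simp
  also have "card ({1..L} - T) = L - n" using T by (simp add: card_Diff_subset finite_subset)
  finally show ?thesis .
qed

theorem proposition4p10:
  fixes p q :: "nat \<Rightarrow> 'a::comm_ring_1" and L n :: nat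
  assumes "1 \<le> n" and "n \<le> L"
    and "\<forall>i\<in>{1..n}. q i = p i"
  shows "Zres L n p q = of_nat ((L - 1) choose (n - 1)) * esym (n - 1) p n ^ (L - n)"
proof -
  have n: "1 \<le> n" "1 \<le> L" using assms by auto
  let ?O = "{w \<in> Omega L n. w 1 = Bullet 1}"
  let ?TT = "{T. T \<subseteq> {1..L} \<and> 1 \<in> T \<and> card T = n}"
  let ?F = "\<lambda>w. \<Prod>j\<in>{1..L} - Tw L w. gg p n (boxlabel (w j))"
  have finO: "finite ?O"
  proof (rule finite_subset)
    show "?O \<subseteq> {1..L} \<rightarrow>\<^sub>E letters n" unfolding Omega_def by auto
    show "finite ({1..L} \<rightarrow>\<^sub>E letters n)" by (rule finite_PiE) (auto simp: letters_def)
  qed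
  have finT: "finite ?TT" by (rule finite_subset[of _ "Pow {1..L}"]) auto
  have img: "Tw L ` ?O \<subseteq> ?TT" using Tw_in[OF _ _ n] by blast
  have "Zres L n p q = (\<Sum>w\<in>?O. ?F w)"
    unfolding Zres_def by (rule sum.cong[OF refl]) (use wt_eq[OF _ _ n assms(3)] in auto)
  also have "\<dots> = (\<Sum>T\<in>?TT. \<Sum>w\<in>{x \<in> ?O. Tw L x = T}. ?F w)"
    by (rule sum.group[OF finO finT img, symmetric])
  also have "\<dots> = (\<Sum>T\<in>?TT. esym (n - 1) p n ^ (L - n))"
    by (rule sum.cong[OF refl]) (use fiber_sum[OF _ _ _ n] in auto)
  also have "\<dots> = of_nat (card ?TT) * esym (n - 1) p n ^ (L - n)" by simp
  also have "card ?TT = (L - 1) choose (n - 1)" by (rule card_Tset[OF n])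
  finally show ?thesis .
qed


end
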